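(* Fix a social state $x\in\mathcal{X}$ and $i_0\in(0,1)$, and let $I(t)$ solve $$\dot I^d_i(t)=-\gamma I^d_i(t)+\lambda(1-s^d_i)\bigl(1-I^d_i(t)\bigr)d\,\Theta(t),\qquad \Theta(t)=\frac{\sum_{d}\sum_{i} d\,x^d_iI^d_i(t)}{\bar d},$$ with $I^d_i(0)=i_0$ for all $d,i$. Then for every $d\in\{1,\dots,D\}$ and all $i,j\in\{1,\dots,n^d\}$ with $i>j$ (so $s^d_i>s^d_j$), we have $I^d_i(t)<I^d_j(t)$ for all $t>0$.
   Context: Setting: $D\in\mathbb{N}_+$ populations indexed by degree $d\in\{1,\dots,D\}$, degree distribution $m^d\in[0,1]$, $\sum_dm^d=1$, $\bar d=\sum_d d\,m^d>0$. Population $d$ has strategies $0\le s^d_1<\dots<s^d_{n^d}\le1$ (strictly increasing). A social state is $x=(x^d_i)$ with $x^d_i\ge0$, $\sum_ix^d_i=m^d$; $\mathcal{X}$ is the set of social states. Constants $\lambda>0$, $\gamma>0$. *)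

theory Defs
  imports "HOL-Analysis.Analysis"
begin

text \<open>Populations are indexed by degree d in {1..D}; population d has strategies
  indexed by i in {1..n d} with strategy values s d i.  A social state x assigns
  mass x d i to strategy i of population d.\<close>

definition social_state :: "nat \<Rightarrow> (nat \<Rightarrow> nat) \<Rightarrow> (nat \<Rightarrow> real) \<Rightarrow> (nat \<Rightarrow> nat \<Rightarrow> real) \<Rightarrow> bool" where
  "social_state D n m x \<longleftrightarrow>
     (\<forall>d\<in>{1..D}. (\<forall>i\<in>{1..n d}. x d i \<ge> 0) \<and> (\<Sum>i\<in>{1..n d}. x d i) = m d)"

definition mean_degree :: "nat \<Rightarrow> (nat \<Rightarrow> real) \<Rightarrow> real" where
  "mean_degree D m = (\<Sum>d\<in>{1..D}. real d * m d)"

definition Theta :: "nat \<Rightarrow> (nat \<Rightarrow> nat) \<Rightarrow> (nat \<Rightarrow> real) \<Rightarrow> (nat \<Rightarrow> nat \<Rightarrow> real)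
    \<Rightarrow> (nat \<Rightarrow> nat \<Rightarrow> real \<Rightarrow> real) \<Rightarrow> real \<Rightarrow> real" where
  "Theta D n m x I t =
     (\<Sum>d\<in>{1..D}. \<Sum>i\<in>{1..n d}. real d * x d i * I d i t) / mean_degree D m"

end

theory Submission
  imports Defs "HOL-Analysis.Analysis"
begin



lemma mono_exp:
  fixes f f' :: "real \<Rightarrow> real"
  assumes "0 \<le> a" "a \<le> b"
    and der: "\<And>t. a \<le> t \<Longrightarrow> t \<le> b \<Longrightarrow> (f has_real_derivative f' t) (at t within {0..})"
    and bd: "\<And>t. a \<le> t \<Longrightarrow> t \<le> b \<Longrightarrow> f' t \<ge> - K * f t"
  shows "exp (K*a) * f a \<le> exp (K*b) * f b"
proof (rule DERIV_nonneg_imp_increasing_open[OF assms(2)])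
  fix x assume x: "a < x" "x < b"
  have "at x within {0..} = at x"
    using x assms(1) by (intro at_within_interior) simp
  then have d: "(f has_real_derivative f' x) (at x)" using der[of x] x by simp
  have "((\<lambda>t. exp (K*t) * f t) has_real_derivative (exp (K*x) * K * f x + exp (K*x) * f' x)) (at x)"
    by (auto intro!: derivative_eq_intros d)
  moreover have "exp (K*x) * K * f x + exp (K*x) * f' x = exp (K*x) * (f' x + K * f x)"
    by (simp add: algebra_simps)
  moreover have "f' x + K * f x \<ge> 0" using bd[of x] x by simp
  ultimately show "\<exists>y. ((\<lambda>t. exp (K*t) * f t) has_real_derivative y) (at x) \<and> 0 \<le> y"
    by auto
next
  have "continuous_on {a..b} f"
    unfolding continuous_on_eq_continuous_within
  proof
    fix t assume t: "t \<in> {a..b}"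
    have "continuous (at t within {0..}) f" using der[of t] t by (auto intro: DERIV_continuous)
    then show "continuous (at t within {a..b}) f"
      by (rule continuous_within_subset) (use assms(1) in auto)
  qed
  then show "continuous_on {a..b} (\<lambda>t. exp (K*t) * f t)"
    by (intro continuous_intros)
qed

lemma pos_family:
  fixes f f' :: "'k \<Rightarrow> real \<Rightarrow> real"
  assumes fin: "finite S" and t0: "0 \<le> t0"
    and pos0: "\<And>k. k\<in>S \<Longrightarrow> f k t0 > 0"
    and der: "\<And>k t. k\<in>S \<Longrightarrow> t0 \<le> t \<Longrightarrow> (f k has_real_derivative f' k t) (at t within {0..})"
    and bnd: "\<And>t k. t0 \<le> t \<Longrightarrow> (\<forall>k\<in>S. \<forall>u\<in>{t0..t}. f k u \<ge> 0) \<Longrightarrow> k\<in>S \<Longrightarrow> f' k t \<ge> - K * f k t"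
    and k: "k\<in>S" and t: "t0 \<le> t"
  shows "f k t > 0"
proof (rule ccontr)
  assume nk: "\<not> f k t > 0"
  have cont: "continuous_on {t0..} (f k)" if "k \<in> S" for k
    unfolding continuous_on_eq_continuous_within
  proof
    fix u assume u: "u \<in> {t0..}"
    have "continuous (at u within {0..}) (f k)" using der[of k u] u that by (auto intro: DERIV_continuous)
    then show "continuous (at u within {t0..}) (f k)"
      by (rule continuous_within_subset) (use t0 in auto)
  qed
  have contI: "continuous_on {t0..u} (f k)" if "k \<in> S" for k u
    by (rule continuous_on_subset[OF cont[OF that]]) auto
  define Z where "Z = (\<Union>k\<in>S. {u \<in> {t0..}. f k u = 0})"
  obtain z where z: "t0 \<le> z" "z \<le> t" "f k z = 0"
    using IVT2'[of "f k" t 0 t0, OF _ _ t contI[OF k]] nk pos0[OF k] by force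
  have Zne: "Z \<noteq> {}" using z k unfolding Z_def by auto
  have Zcl: "closed Z" unfolding Z_def
    by (intro closed_UN fin ballI continuous_closed_preimage_constant cont) auto
  have Zbd: "bdd_below Z" unfolding Z_def by (rule bdd_belowI[of _ t0]) auto
  define t1 where "t1 = Inf Z"
  have t1Z: "t1 \<in> Z" unfolding t1_def by (rule closed_contains_Inf[OF Zne Zbd Zcl])
  then obtain k1 where k1: "k1 \<in> S" "f k1 t1 = 0" "t0 \<le> t1" unfolding Z_def by auto
  have nonneg: "\<forall>k\<in>S. \<forall>u\<in>{t0..t1}. f k u \<ge> 0"
  proof (intro ballI, rule ccontr)
    fix k u assume ku: "k \<in> S" "u \<in> {t0..t1}" "\<not> 0 \<le> f k u"
    obtain w where w: "t0 \<le> w" "w \<le> u" "f k w = 0"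
      using IVT2'[of "f k" u 0 t0, OF _ _ _ contI[OF ku(1)]] ku pos0[OF ku(1)] by force
    have "w \<noteq> u" using w ku by auto
    then have "w < t1" using w ku by auto
    moreover have "w \<in> Z" using w ku unfolding Z_def by auto
    then have "t1 \<le> w" unfolding t1_def by (rule cInf_lower[OF _ Zbd])
    ultimately show False by simp
  qed
  have "exp (K*t0) * f k1 t0 \<le> exp (K*t1) * f k1 t1"
    by (rule mono_exp[OF t0 k1(3)]) (use der[OF k1(1)] bnd nonneg k1 in auto)
  moreover have "exp (K*t0) * f k1 t0 > 0" using pos0[OF k1(1)] by simp
  ultimately show False using k1 by simp
qed



lemma q_bound:
  fixes s th dd DD :: real
  assumes "0 \<le> s" "s \<le> 1" "0 \<le> th" "th \<le> 1" "0 \<le> dd" "dd \<le> DD"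
  shows "0 \<le> (1-s)*dd*th" "(1-s)*dd*th \<le> DD"
proof -
  show "0 \<le> (1-s)*dd*th" using assms by simp
  have "(1-s)*dd*th \<le> 1*DD*1"
    by (intro mult_mono) (use assms in auto)
  then show "(1-s)*dd*th \<le> DD" by simp
qed

lemma ineqA:
  fixes I s th dd DD lam g :: real
  assumes "0 \<le> I" "I \<le> 1" "0 \<le> s" "s \<le> 1" "0 \<le> th" "th \<le> 1" "0 \<le> dd" "dd \<le> DD"
    "lam > 0" "g > 0"
  shows "- g * I + lam * (1 - s) * (1 - I) * dd * th \<ge> - (g + lam*DD) * I"
    "- (- g * I + lam * (1 - s) * (1 - I) * dd * th) \<ge> - (g + lam*DD) * (1 - I)"
proof -
  define q where "q = (1-s)*dd*th"
  have q: "0 \<le> q" "q \<le> DD" unfolding q_def using q_bound assms by auto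
  have e: "lam * (1 - s) * (1 - I) * dd * th = lam * (1 - I) * q" unfolding q_def by (simp add: algebra_simps)
  have "lam * (1 - I) * q \<ge> 0" using q assms by simp
  moreover have "lam*DD*I \<ge> 0" using q assms by simp
  ultimately show "- g * I + lam * (1 - s) * (1 - I) * dd * th \<ge> - (g + lam*DD) * I"
    unfolding e by (simp add: algebra_simps)
  have "lam * (1 - I) * q \<le> lam * (1-I) * DD"
    using q assms by (intro mult_left_mono) auto
  then show "- (- g * I + lam * (1 - s) * (1 - I) * dd * th) \<ge> - (g + lam*DD) * (1 - I)"
    unfolding e using assms by (simp add: algebra_simps)
qed

lemma ineqB:
  fixes Ii Ij si sj th dd DD lam g :: real
  assumes "Ii < 1" "Ij \<le> 1" "0 \<le> sj" "sj < si" "si \<le> 1" "0 < th" "th \<le> 1" "0 < dd" "dd \<le> DD"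
    "lam > 0" "g > 0" "Ij - Ii \<ge> 0"
  shows "(- g * Ij + lam * (1 - sj) * (1 - Ij) * dd * th) - (- g * Ii + lam * (1 - si) * (1 - Ii) * dd * th)
      \<ge> - (g + lam*DD) * (Ij - Ii)"
    "Ij = Ii \<Longrightarrow> (- g * Ij + lam * (1 - sj) * (1 - Ij) * dd * th) - (- g * Ii + lam * (1 - si) * (1 - Ii) * dd * th) > 0"
proof -
  define q where "q = (1-sj)*dd*th"
  have q: "0 \<le> q" "q \<le> DD" unfolding q_def using q_bound[of sj th dd DD] assms by auto
  have e: "(- g * Ij + lam * (1 - sj) * (1 - Ij) * dd * th) - (- g * Ii + lam * (1 - si) * (1 - Ii) * dd * th)
     = - g * (Ij - Ii) - lam * q * (Ij - Ii) + lam * dd * th * (si - sj) * (1 - Ii)"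
    unfolding q_def by (simp add: algebra_simps)
  have p: "lam * dd * th * (si - sj) * (1 - Ii) > 0" using assms by simp
  have "lam * q * (Ij - Ii) \<le> lam * DD * (Ij - Ii)"
    using q assms by (intro mult_right_mono mult_left_mono) auto
  then show "(- g * Ij + lam * (1 - sj) * (1 - Ij) * dd * th) - (- g * Ii + lam * (1 - si) * (1 - Ii) * dd * th)
      \<ge> - (g + lam*DD) * (Ij - Ii)" unfolding e using p by (simp add: algebra_simps)
  show "Ij = Ii \<Longrightarrow> (- g * Ij + lam * (1 - sj) * (1 - Ij) * dd * th) - (- g * Ii + lam * (1 - si) * (1 - Ii) * dd * th) > 0"
    unfolding e using p by simp
qed


lemma theta_bounds:
  assumes xs: "social_state D n m x" and dp: "mean_degree D m > 0"
    and Ib: "\<forall>d\<in>{1..D}. \<forall>i\<in>{1..n d}. 0 \<le> I d i t \<and> I d i t \<le> 1"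
  shows "0 \<le> Theta D n m x I t" "Theta D n m x I t \<le> 1"
proof -
  have xn: "\<forall>d\<in>{1..D}. \<forall>i\<in>{1..n d}. x d i \<ge> 0" and xsum: "\<forall>d\<in>{1..D}. (\<Sum>i\<in>{1..n d}. x d i) = m d"
    using xs unfolding social_state_def by auto
  have "0 \<le> (\<Sum>d\<in>{1..D}. \<Sum>i\<in>{1..n d}. real d * x d i * I d i t)"
    using xn Ib by (intro sum_nonneg) auto
  then show "0 \<le> Theta D n m x I t" unfolding Theta_def using dp by simp
  have "(\<Sum>d\<in>{1..D}. \<Sum>i\<in>{1..n d}. real d * x d i * I d i t) \<le> (\<Sum>d\<in>{1..D}. \<Sum>i\<in>{1..n d}. real d * x d i)"
    using xn Ib by (intro sum_mono mult_left_le) auto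
  also have "\<dots> = (\<Sum>d\<in>{1..D}. real d * m d)"
    using xsum by (intro sum.cong) (auto simp: sum_distrib_left[symmetric])
  also have "\<dots> = mean_degree D m" unfolding mean_degree_def ..
  finally show "Theta D n m x I t \<le> 1" unfolding Theta_def using dp by simp
qed

lemma theta_pos:
  assumes xs: "social_state D n m x" and dp: "mean_degree D m > 0"
    and Ib: "\<forall>d\<in>{1..D}. \<forall>i\<in>{1..n d}. 0 < I d i t"
  shows "0 < Theta D n m x I t"
proof -
  have xn: "\<forall>d\<in>{1..D}. \<forall>i\<in>{1..n d}. x d i \<ge> 0" and xsum: "\<forall>d\<in>{1..D}. (\<Sum>i\<in>{1..n d}. x d i) = m d"
    using xs unfolding social_state_def by auto
  obtain d where d: "d \<in> {1..D}" "real d * m d > 0"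
  proof (rule ccontr)
    assume "\<not> thesis"
    then have "\<forall>d\<in>{1..D}. real d * m d \<le> 0" using that by force
    then have "mean_degree D m \<le> 0" unfolding mean_degree_def by (intro sum_nonpos) auto
    then show False using dp by simp
  qed
  have md: "m d > 0" using d by (simp add: zero_less_mult_iff)
  obtain i where i: "i \<in> {1..n d}" "x d i > 0"
  proof (rule ccontr)
    assume "\<not> thesis"
    then have "\<forall>i\<in>{1..n d}. x d i \<le> 0" using that by force
    then have "(\<Sum>i\<in>{1..n d}. x d i) \<le> 0" by (intro sum_nonpos) auto
    then show False using xsum d md by simp
  qed
  have nn: "\<forall>d\<in>{1..D}. \<forall>ia\<in>{1..n d}. 0 \<le> real d * x d ia * I d ia t"
  proof (intro ballI)
    fix d ia assume h: "d \<in> {1..D}" "ia \<in> {1..n d}"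
    have "0 \<le> x d ia" "0 \<le> I d ia t" using xn Ib h by (auto intro: less_imp_le)
    then show "0 \<le> real d * x d ia * I d ia t" by simp
  qed
  have pos: "(\<Sum>i\<in>{1..n d}. real d * x d i * I d i t) > 0"
    using i d nn Ib by (intro sum_pos2[where i=i]) auto
  have "(\<Sum>d\<in>{1..D}. \<Sum>i\<in>{1..n d}. real d * x d i * I d i t) > 0"
    using d pos nn by (intro sum_pos2[where i=d and f="\<lambda>d. \<Sum>i\<in>{1..n d}. real d * x d i * I d i t"]) (auto intro!: sum_nonneg)
  then show ?thesis unfolding Theta_def using dp by simp
qed
theorem mainTheorem6:
  fixes D :: nat and n :: "nat \<Rightarrow> nat" and m :: "nat \<Rightarrow> real"
    and s :: "nat \<Rightarrow> nat \<Rightarrow> real" and x :: "nat \<Rightarrow> nat \<Rightarrow> real"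
    and lam \<gamma> i0 :: real and I :: "nat \<Rightarrow> nat \<Rightarrow> real \<Rightarrow> real"
  assumes D_pos: "D \<ge> 1"
    and n_pos: "\<forall>d\<in>{1..D}. n d \<ge> 1"
    and m_range: "\<forall>d\<in>{1..D}. 0 \<le> m d \<and> m d \<le> 1"
    and m_sum: "(\<Sum>d\<in>{1..D}. m d) = 1"
    and dbar_pos: "mean_degree D m > 0"
    and s_range: "\<forall>d\<in>{1..D}. \<forall>i\<in>{1..n d}. 0 \<le> s d i \<and> s d i \<le> 1"
    and s_mono: "\<forall>d\<in>{1..D}. \<forall>i\<in>{1..n d}. \<forall>j\<in>{1..n d}. j < i \<longrightarrow> s d j < s d i"
    and lam_pos: "lam > 0" and gamma_pos: "\<gamma> > 0"
    and x_state: "social_state D n m x"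
    and i0_range: "0 < i0" "i0 < 1"
    and init: "\<forall>d\<in>{1..D}. \<forall>i\<in>{1..n d}. I d i 0 = i0"
    and ode: "\<forall>d\<in>{1..D}. \<forall>i\<in>{1..n d}. \<forall>t\<ge>0.
        ((I d i) has_real_derivative
          (- \<gamma> * I d i t + lam * (1 - s d i) * (1 - I d i t) * real d * Theta D n m x I t))
        (at t within {0..})"
  shows "\<forall>d\<in>{1..D}. \<forall>i\<in>{1..n d}. \<forall>j\<in>{1..n d}. j < i \<longrightarrow>
           (\<forall>t>0. I d i t < I d j t)"
  proof -
  define rhs where "rhs d i t = - \<gamma> * I d i t + lam * (1 - s d i) * (1 - I d i t) * real d * Theta D n m x I t" for d i t
  define K where "K = \<gamma> + lam * real D"
  have ode': "(I d i has_real_derivative rhs d i t) (at t within {0..})"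
    if "d \<in> {1..D}" "i \<in> {1..n d}" "0 \<le> t" for d i t
    using ode that unfolding rhs_def by auto
  define S where "S = (SIGMA d:{1..D}. {1..n d} \<times> (UNIV::bool set))"
  define f :: "nat \<times> nat \<times> bool \<Rightarrow> real \<Rightarrow> real"
    where "f = (\<lambda>(d,i,b). if b then I d i else (\<lambda>t. 1 - I d i t))"
  define f' :: "nat \<times> nat \<times> bool \<Rightarrow> real \<Rightarrow> real"
    where "f' = (\<lambda>(d,i,b) t. if b then rhs d i t else - rhs d i t)"
  have finS: "finite S" unfolding S_def by (intro finite_SigmaI) auto
  have pos0: "f k 0 > 0" if "k \<in> S" for k
  proof -
    obtain d i b where k: "k = (d,i,b)" by (cases k) auto
    show ?thesis using that init i0_range unfolding k S_def f_def by auto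
  qed
  have der: "(f k has_real_derivative f' k t) (at t within {0..})" if "k \<in> S" "0 \<le> t" for k t
  proof -
    obtain d i b where k: "k = (d,i,b)" by (cases k) auto
    have di: "d \<in> {1..D}" "i \<in> {1..n d}" using that unfolding k S_def by auto
    show ?thesis
    proof (cases b)
      case True then show ?thesis unfolding k f_def f'_def using ode'[OF di that(2)] by simp
    next
      case False
      have "((\<lambda>t. 1 - I d i t) has_real_derivative (0 - rhs d i t)) (at t within {0..})"
        by (intro DERIV_diff DERIV_const ode'[OF di that(2)])
      then show ?thesis unfolding k f_def f'_def using False by simp
    qed
  qed
  have bnd: "f' k t \<ge> - K * f k t"
    if t: "0 \<le> t" and h: "\<forall>k\<in>S. \<forall>u\<in>{0..t}. f k u \<ge> 0" and kS: "k \<in> S" for t k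
  proof -
    have Ib: "\<forall>d\<in>{1..D}. \<forall>i\<in>{1..n d}. 0 \<le> I d i t \<and> I d i t \<le> 1"
    proof (intro ballI)
      fix d i assume "d \<in> {1..D}" "i \<in> {1..n d}"
      then have "(d,i,True) \<in> S" "(d,i,False) \<in> S" unfolding S_def by auto
      then show "0 \<le> I d i t \<and> I d i t \<le> 1" using h t unfolding f_def by fastforce
    qed
    note th = theta_bounds(1)[of D n m x I t, OF x_state dbar_pos Ib] theta_bounds(2)[of D n m x I t, OF x_state dbar_pos Ib]
    obtain d i b where k: "k = (d,i,b)" by (cases k) auto
    have di: "d \<in> {1..D}" "i \<in> {1..n d}" using kS unfolding k S_def by auto
    note A = ineqA[of "I d i t" "s d i" "Theta D n m x I t" "real d" "real D" lam \<gamma>]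
    show ?thesis
      using A Ib di s_range th lam_pos gamma_pos unfolding k f_def f'_def rhs_def K_def
      by auto
  qed
  have inv: "0 < I d i t \<and> I d i t < 1" if di: "d \<in> {1..D}" "i \<in> {1..n d}" and t: "0 \<le> t" for d i t
  proof -
    have "(d,i,True) \<in> S" "(d,i,False) \<in> S" using di unfolding S_def by auto
    then have "f (d,i,True) t > 0" "f (d,i,False) t > 0"
      using pos_family[OF finS order_refl pos0 der bnd _ t] by auto
    then show ?thesis unfolding f_def by auto
  qed
  show ?thesis
  proof (intro ballI impI allI)
    fix d i j and t :: real assume d: "d \<in> {1..D}" and i: "i \<in> {1..n d}" and j: "j \<in> {1..n d}"
      and ji: "j < i" and t: "0 < t"
    define g where "g = (\<lambda>t. I d j t - I d i t)"
    define g' where "g' = (\<lambda>t. rhs d j t - rhs d i t)"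
    have gder: "(g has_real_derivative g' t) (at t within {0..})" if "0 \<le> t" for t
      unfolding g_def g'_def by (intro DERIV_diff ode' d i j that)
    have sij: "0 \<le> s d j" "s d j < s d i" "s d i \<le> 1" using s_range s_mono d i j ji by auto
    have gB: "g' t \<ge> - K * g t \<and> (g t = 0 \<longrightarrow> g' t > 0)" if "0 \<le> t" "g t \<ge> 0" for t
    proof -
      have Ib: "\<forall>d\<in>{1..D}. \<forall>i\<in>{1..n d}. 0 \<le> I d i t \<and> I d i t \<le> 1"
      proof (intro ballI)
        fix d' i' assume "d' \<in> {1..D}" "i' \<in> {1..n d'}"
        from inv[OF this that(1)] show "0 \<le> I d' i' t \<and> I d' i' t \<le> 1" by simp
      qed
      have Ip: "\<forall>d\<in>{1..D}. \<forall>i\<in>{1..n d}. 0 < I d i t"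
      proof (intro ballI)
        fix d' i' assume "d' \<in> {1..D}" "i' \<in> {1..n d'}"
        from inv[OF this that(1)] show "0 < I d' i' t" by simp
      qed
      have th1: "Theta D n m x I t \<le> 1"
        using Ib theta_bounds(2)[of D n m x I t, OF x_state dbar_pos] inv that by (auto intro: less_imp_le)
      have th0: "Theta D n m x I t > 0"
        using theta_pos[of D n m x I t, OF x_state dbar_pos] Ip by auto
      have dD: "0 < real d" "real d \<le> real D" using d by auto
      note B = ineqB[of "I d i t" "I d j t" "s d j" "s d i" "Theta D n m x I t" "real d" "real D" lam \<gamma>]
      show ?thesis using B inv[OF d i that(1)] inv[OF d j that(1)] sij th0 th1 dD lam_pos gamma_pos that(2)
        unfolding g_def g'_def rhs_def K_def by auto
    qed
    have g0: "g 0 = 0" unfolding g_def using init d i j by auto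
    have "g' 0 > 0" using gB[of 0] g0 by simp
    from has_real_derivative_pos_inc_right[OF gder[of 0] this]
    obtain \<delta> where del: "\<delta> > 0" "\<And>h. h > 0 \<Longrightarrow> h < \<delta> \<Longrightarrow> g 0 < g h" by auto
    have "g t > 0"
    proof (cases "t < \<delta>")
      case True then show ?thesis using del t g0 by auto
    next
      case False
      have "(\<lambda>_::unit. g) () t > 0"
      proof (rule pos_family[of "{()}" "\<delta>/2" "\<lambda>_. g" "\<lambda>_. g'" K])
        show "0 \<le> \<delta>/2" using del by simp
        show "\<And>k. k \<in> {()} \<Longrightarrow> 0 < g (\<delta>/2)" using del g0 by auto
        show "\<And>k u. k \<in> {()} \<Longrightarrow> \<delta>/2 \<le> u \<Longrightarrow> (g has_real_derivative g' u) (at u within {0..})"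
          using gder del by auto
        show "\<And>u k. \<delta>/2 \<le> u \<Longrightarrow> \<forall>k\<in>{()}. \<forall>v\<in>{\<delta>/2..u}. 0 \<le> g v \<Longrightarrow> k \<in> {()} \<Longrightarrow> - K * g u \<le> g' u"
          using gB del by auto
        show "\<delta>/2 \<le> t" using False del by simp
      qed auto
      then show ?thesis by simp
    qed
    then show "I d i t < I d j t" unfolding g_def by simp
  qed
qed

end
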